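(* Let $q$ be a prime power, $n\ge 4$, and let $\mathcal{L}$ be a Cameron-Liebler line class of $\mathrm{AG}(n,q)$ with parameter $x=2$. Then for every two points $p_1,p_2$ of $\pi_\infty$, there are exactly two lines of $\mathcal{L}$ through $p_1$ and exactly two through $p_2$ (a line passing through a point of $\pi_\infty$ meaning its projective closure contains it), and these four lines span a projective subspace of $\mathrm{PG}(n,q)$ of dimension at most $3$.
   Context: $\mathrm{AG}(n,q)$ is $\mathrm{PG}(n,q)$ with a hyperplane $\pi_\infty$ removed; affine points are points outside $\pi_\infty$, affine lines are projective lines not contained in $\pi_\infty$. With $A_n$ the incidence matrix of affine points versus affine lines, a set $\mathcal{L}$ of affine lines is a Cameron-Liebler line class of $\mathrm{AG}(n,q)$ if its characteristic vector lies in the real row space $\mathrm{Im}(A_n^T)$; its parameter is $|\mathcal{L}|(q-1)/(q^n-1)$. *)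

theory Defs
  imports Complex_Main "HOL-Library.Function_Algebras"
begin

text \<open>Underlying vector space of PG(n,q): F^(n+1), modelled as functions
  nat => F with coordinates 0..n (all other coordinates zero).
  Coordinate 0 = 0 defines the hyperplane at infinity.\<close>

definition scal :: "'a::field \<Rightarrow> (nat \<Rightarrow> 'a) \<Rightarrow> (nat \<Rightarrow> 'a)" where
  "scal c v = (\<lambda>i. c * v i)"

definition vecs :: "nat \<Rightarrow> (nat \<Rightarrow> 'a::field) set" where
  "vecs n = {v. \<forall>i>n. v i = 0}"

text \<open>Projective subspaces of PG(n,F) of projective dimension k:
  vector subspaces of F^(n+1) of (vector) dimension k+1.\<close>
definition proj_subspaces :: "nat \<Rightarrow> nat \<Rightarrow> (nat \<Rightarrow> 'a::field) set set" where
  "proj_subspaces n k = {S. S \<subseteq> vecs n \<and> module.subspace scal S \<and> vector_space.dim scal S = k + 1}"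

definition proj_points :: "nat \<Rightarrow> (nat \<Rightarrow> 'a::field) set set" where
  "proj_points n = proj_subspaces n 0"

definition proj_lines :: "nat \<Rightarrow> (nat \<Rightarrow> 'a::field) set set" where
  "proj_lines n = proj_subspaces n 1"

definition hyp_inf :: "nat \<Rightarrow> (nat \<Rightarrow> 'a::field) set" where
  "hyp_inf n = {v \<in> vecs n. v 0 = 0}"

definition points_at_inf :: "nat \<Rightarrow> (nat \<Rightarrow> 'a::field) set set" where
  "points_at_inf n = {P \<in> proj_points n. P \<subseteq> hyp_inf n}"

definition affine_points :: "nat \<Rightarrow> (nat \<Rightarrow> 'a::field) set set" where
  "affine_points n = {P \<in> proj_points n. \<not> P \<subseteq> hyp_inf n}"

definition affine_lines :: "nat \<Rightarrow> (nat \<Rightarrow> 'a::field) set set" where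
  "affine_lines n = {l \<in> proj_lines n. \<not> l \<subseteq> hyp_inf n}"

text \<open>Cameron-Liebler line class of AG(n,q): the characteristic vector of L
  lies in the real row space Im(A_n^T) of the point-line incidence matrix A_n,
  i.e. it equals A_n^T f for some real vector f indexed by affine points.\<close>
definition CL_line_class :: "nat \<Rightarrow> (nat \<Rightarrow> 'a::{finite,field}) set set \<Rightarrow> bool" where
  "CL_line_class n L \<longleftrightarrow> L \<subseteq> affine_lines n \<and>
     (\<exists>f :: (nat \<Rightarrow> 'a) set \<Rightarrow> real.
        \<forall>l \<in> affine_lines n.
          (if l \<in> L then 1 else 0) = (\<Sum>P \<in> {P \<in> affine_points n. P \<subseteq> l}. f P))"

definition CL_parameter :: "nat \<Rightarrow> (nat \<Rightarrow> 'a::{finite,field}) set set \<Rightarrow> real" where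
  "CL_parameter n L = real (card L) * (real (card (UNIV :: 'a set)) - 1) / (real (card (UNIV :: 'a set)) ^ n - 1)"

end

theory Submission
  imports Defs "HOL-Library.FuncSet"
begin

interpretation V: vector_space "scal :: 'a::field \<Rightarrow> (nat \<Rightarrow> 'a) \<Rightarrow> (nat \<Rightarrow> 'a)"
  by unfold_locales (auto simp: scal_def fun_eq_iff algebra_simps)

lemma vecs_subspace: "V.subspace (vecs n :: (nat \<Rightarrow> 'a::field) set)"
  unfolding V.subspace_def vecs_def by (auto simp: scal_def)

lemma hyp_subspace: "V.subspace (hyp_inf n :: (nat \<Rightarrow> 'a::field) set)"
  unfolding V.subspace_def vecs_def hyp_inf_def by (auto simp: scal_def)

lemma hyp_sub_vecs: "hyp_inf n \<subseteq> vecs n"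
  unfolding hyp_inf_def by auto

lemma vecs_finite: "finite (vecs n :: (nat \<Rightarrow> 'a::{finite,field}) set)"
proof (rule inj_on_finite[where f="\<lambda>v. restrict v {..n}" and B="{..n} \<rightarrow>\<^sub>E (UNIV :: 'a set)"])
  show "inj_on (\<lambda>v. restrict v {..n}) (vecs n :: (nat \<Rightarrow> 'a) set)"
  proof (rule inj_onI)
    fix v w :: "nat \<Rightarrow> 'a" assume v: "v \<in> vecs n" and w: "w \<in> vecs n"
      and e: "restrict v {..n} = restrict w {..n}"
    show "v = w"
    proof
      fix i show "v i = w i"
      proof (cases "i \<le> n")
        case True then show ?thesis using fun_cong[OF e, of i] by simp
      next
        case False then show ?thesis using v w by (simp add: vecs_def)
      qed
    qed
  qed
  show "finite ({..n} \<rightarrow>\<^sub>E (UNIV :: 'a set))" by (simp add: finite_PiE)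
qed (simp_all add: image_subset_iff)

lemma span_vecs: "S \<subseteq> vecs n \<Longrightarrow> V.span S \<subseteq> vecs n"
  by (simp add: V.span_minimal vecs_subspace)

lemma span_hyp: "S \<subseteq> hyp_inf n \<Longrightarrow> V.span S \<subseteq> hyp_inf n"
  by (simp add: V.span_minimal hyp_subspace)

lemma indep_finite:
  fixes B :: "(nat \<Rightarrow> 'a::{finite,field}) set"
  shows "B \<subseteq> vecs n \<Longrightarrow> finite B"
  using vecs_finite finite_subset by blast

lemma dim_mono':
  fixes A W :: "(nat \<Rightarrow> 'a::{finite,field}) set"
  assumes "A \<subseteq> V.span W" "W \<subseteq> vecs n"
  shows "V.dim A \<le> V.dim W"
proof -
  obtain B where B: "V.independent B" "B \<subseteq> W" "W \<subseteq> V.span B"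
    using V.maximal_independent_subset[of W] by force
  have fB: "finite B" using B(2) assms(2) indep_finite by blast
  have "A \<subseteq> V.span B" using assms(1) B(3)
    by (metis V.span_mono V.span_span order_trans)
  then have "V.dim A \<le> card B" using V.dim_le_card fB by blast
  also have "card B = V.dim W" using V.basis_card_eq_dim B by blast
  finally show ?thesis .
qed

lemma indep_card_le:
  fixes B T :: "(nat \<Rightarrow> 'a::{finite,field}) set"
  assumes "B \<subseteq> T" "V.independent B" "T \<subseteq> vecs n"
  shows "card B \<le> V.dim T"
proof -
  have "card B = V.dim B" using V.dim_eq_card_independent assms(2) by metis
  also have "\<dots> \<le> V.dim T" using dim_mono'[of B T n] assms V.span_superset by blast
  finally show ?thesis .
qed

lemma subspace_eq_dim:
  fixes S T :: "(nat \<Rightarrow> 'a::{finite,field}) set"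
  assumes S: "V.subspace S" and T: "V.subspace T" and ST: "S \<subseteq> T" and Tv: "T \<subseteq> vecs n"
    and d: "V.dim T \<le> V.dim S"
  shows "S = T"
proof (rule ccontr)
  assume ne: "S \<noteq> T"
  obtain B where B: "B \<subseteq> S" "V.independent B" "S \<subseteq> V.span B" "card B = V.dim S"
    using V.basis_exists by blast
  have spB: "V.span B = S" using B S by (simp add: V.span_subspace)
  obtain x where x: "x \<in> T" "x \<notin> S" using ne ST by blast
  have xB: "x \<notin> V.span B" using spB x by simp
  have ind: "V.independent (insert x B)" using B(2) xB V.independent_insertI by blast
  have fB: "finite B" using B(1) ST Tv indep_finite by blast
  have "x \<notin> B" using xB V.span_base by blast
  then have "card (insert x B) = card B + 1" using fB by simp
  moreover have "card (insert x B) \<le> V.dim T"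
    using indep_card_le[of "insert x B" T n] ind x B ST Tv by blast
  ultimately show False using B(4) d by simp
qed

lemma span1_eq: "V.span {a} = range (\<lambda>k. scal k a)"
  by (rule V.span_singleton)

lemma point_iff:
  fixes P :: "(nat \<Rightarrow> 'a::{finite,field}) set"
  shows "P \<in> proj_points n \<longleftrightarrow> (\<exists>a\<in>vecs n. a \<noteq> 0 \<and> P = V.span {a})"
proof
  assume "P \<in> proj_points n"
  then have P: "P \<subseteq> vecs n" "V.subspace P" "V.dim P = 1"
    unfolding proj_points_def proj_subspaces_def by auto
  obtain B where B: "B \<subseteq> P" "V.independent B" "P \<subseteq> V.span B" "card B = V.dim P"
    using V.basis_exists by blast
  have "card B = Suc 0" using P(3) B(4) by simp
  then obtain a where a: "B = {a}" using card_1_singleton_iff[of B] by auto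
  have "a \<noteq> 0" using B(2) a by simp
  moreover have "P = V.span {a}" using V.span_subspace[of B P] B P a by simp
  moreover have "a \<in> vecs n" using a B P by auto
  ultimately show "\<exists>a\<in>vecs n. a \<noteq> 0 \<and> P = V.span {a}" by blast
next
  assume "\<exists>a\<in>vecs n. a \<noteq> 0 \<and> P = V.span {a}"
  then obtain a where a: "a \<in> vecs n" "a \<noteq> 0" "P = V.span {a}" by blast
  have "V.independent {a}" using a by simp
  then have "V.dim P = 1" using a V.dim_span_eq_card_independent by fastforce
  moreover have "P \<subseteq> vecs n" using a span_vecs[of "{a}" n] by auto
  ultimately show "P \<in> proj_points n"
    unfolding proj_points_def proj_subspaces_def using a by auto
qed

lemma indep2:
  assumes "a \<noteq> 0" "b \<notin> V.span {a}"
  shows "V.independent {a, b} \<and> a \<noteq> b"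
proof -
  have "b \<noteq> a" using assms(2) V.span_base by blast
  moreover have "V.independent {b, a}"
    using assms by (simp add: V.independent_insert)
  ultimately show ?thesis by (simp add: insert_commute)
qed

lemma indep2_coeffs:
  assumes ind: "V.independent {a, b}" and ab: "a \<noteq> b"
    and e: "scal s a + scal t b = 0"
  shows "s = 0 \<and> t = 0"
proof -
  have b0: "b \<noteq> 0" using ind V.dependent_zero by blast
  have a0: "a \<noteq> 0" using ind V.dependent_zero by blast
  have ei: "s * a i + t * b i = 0" for i using fun_cong[OF e, of i] by (simp add: scal_def)
  have s0: "s = 0"
  proof (rule ccontr)
    assume s: "s \<noteq> 0"
    have "a = scal (- t / s) b"
    proof
      fix i
      have "t * b i = - (s * a i)" using ei[of i] by (simp add: add_eq_0_iff)
      then have "a i = (- t / s) * b i" using s by (simp add: field_simps)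
      then show "a i = scal (- t / s) b i" by (simp add: scal_def)
    qed
    moreover have "{a, b} - {a} = {b}" using ab by auto
    moreover have "scal (- t / s) b \<in> V.span {b}"
      by (rule V.span_scale) (simp add: V.span_base)
    ultimately have "a \<in> V.span ({a, b} - {a})" by metis
    then show False using ind V.dependent_def by blast
  qed
  then have "scal t b = 0" using e by (simp add: scal_def fun_eq_iff)
  then have "t = 0" using b0 by simp
  with s0 show ?thesis by simp
qed

lemma line_iff: "l \<in> proj_lines n \<longleftrightarrow> l \<subseteq> vecs n \<and> V.subspace l \<and> V.dim l = 2"
  unfolding proj_lines_def proj_subspaces_def by auto

lemma line_span2:
  fixes a b :: "nat \<Rightarrow> 'a::{finite,field}"
  assumes "a \<in> vecs n" "b \<in> vecs n" "V.independent {a, b}" "a \<noteq> b"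
  shows "V.span {a, b} \<in> proj_lines n"
proof -
  have "V.dim (V.span {a, b}) = 2"
    using V.dim_span_eq_card_independent[OF assms(3)] assms(4) by simp
  moreover have "V.span {a, b} \<subseteq> vecs n" using span_vecs[of "{a,b}" n] assms by auto
  ultimately show ?thesis unfolding line_iff by auto
qed

lemma line_sub_eq:
  fixes a b :: "nat \<Rightarrow> 'a::{finite,field}"
  assumes l: "l \<in> proj_lines n" and "V.independent {a, b}" "a \<noteq> b" "a \<in> l" "b \<in> l"
  shows "l = V.span {a, b}"
proof -
  have lv: "l \<subseteq> vecs n" "V.subspace l" "V.dim l = 2" using l line_iff by auto
  have "V.dim (V.span {a, b}) = 2"
    using V.dim_span_eq_card_independent[OF assms(2)] assms(3) by simp
  moreover have "V.span {a, b} \<subseteq> l" using assms lv by (simp add: V.span_minimal)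
  ultimately show ?thesis using subspace_eq_dim[of "V.span {a,b}" l n] lv by auto
qed

lemma line_basis:
  fixes l :: "(nat \<Rightarrow> 'a::{finite,field}) set"
  assumes l: "l \<in> proj_lines n"
  shows "\<exists>a b. a \<in> l \<and> b \<in> l \<and> a \<noteq> b \<and> V.independent {a, b} \<and> l = V.span {a, b}"
proof -
  have lv: "l \<subseteq> vecs n" "V.subspace l" "V.dim l = 2" using l line_iff by auto
  obtain B where B: "B \<subseteq> l" "V.independent B" "l \<subseteq> V.span B" "card B = V.dim l"
    using V.basis_exists by blast
  have "card B = 2" using lv(3) B(4) by simp
  then obtain a b where ab: "B = {a, b}" "a \<noteq> b" unfolding card_2_iff by blast
  have "l = V.span B" using V.span_subspace[of B l] B lv by simp
  then show ?thesis using ab B by blast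
qed

lemma line_extend:
  fixes l :: "(nat \<Rightarrow> 'a::{finite,field}) set"
  assumes l: "l \<in> proj_lines n" and a: "a \<in> l" "a \<noteq> 0"
  shows "\<exists>b. b \<in> l \<and> a \<noteq> b \<and> V.independent {a, b} \<and> l = V.span {a, b}"
proof -
  have lv: "l \<subseteq> vecs n" "V.subspace l" "V.dim l = 2" using l line_iff by auto
  obtain B where B: "{a} \<subseteq> B" "B \<subseteq> l" "V.independent B" "l \<subseteq> V.span B"
    using V.maximal_independent_subset_extend[of "{a}" l] a by auto
  have cB: "card B = 2" using V.basis_card_eq_dim[of B l] B lv by simp
  then obtain x y where xy: "B = {x, y}" "x \<noteq> y" unfolding card_2_iff by blast
  obtain b where b: "B = {a, b}" "a \<noteq> b"
  proof (cases "a = x")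
    case True then show ?thesis using that xy by blast
  next
    case False then have "a = y" using xy B(1) by blast
    then show ?thesis using that[of x] xy by (simp add: insert_commute)
  qed
  have "l = V.span B" using V.span_subspace[of B l] B lv by simp
  then show ?thesis using b B by blast
qed

lemma point_in_H:
  fixes c :: "nat \<Rightarrow> 'a::field"
  assumes "c \<in> vecs n"
  shows "V.span {c} \<subseteq> hyp_inf n \<longleftrightarrow> c 0 = 0"
proof
  assume "V.span {c} \<subseteq> hyp_inf n"
  then show "c 0 = 0" using V.span_base[of c "{c}"] by (auto simp: hyp_inf_def)
next
  assume "c 0 = 0"
  then have "{c} \<subseteq> hyp_inf n" using assms by (auto simp: hyp_inf_def)
  then show "V.span {c} \<subseteq> hyp_inf n" by (rule span_hyp)
qed

lemma point_sub_eq: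
  fixes p p' :: "(nat \<Rightarrow> 'a::{finite,field}) set"
  assumes "p \<in> proj_points n" "p' \<in> proj_points n" "p \<subseteq> p'"
  shows "p = p'"
  using assms subspace_eq_dim[of p p' n]
  unfolding proj_points_def proj_subspaces_def by auto

lemma points_distinct_vec:
  fixes a c :: "nat \<Rightarrow> 'a::{finite,field}"
  assumes "a \<in> vecs n" "a \<noteq> 0" "c \<in> vecs n" "c \<noteq> 0" "V.span {a} \<noteq> V.span {c}"
  shows "c \<notin> V.span {a}"
proof
  assume "c \<in> V.span {a}"
  then have "V.span {c} \<subseteq> V.span {a}" by (simp add: V.span_minimal)
  moreover have "V.span {c} \<in> proj_points n" "V.span {a} \<in> proj_points n"
    using assms point_iff by blast+
  ultimately show False using point_sub_eq[of "V.span {c}" n "V.span {a}"] assms(5) by simp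
qed

lemma line_unique:
  fixes p p' l l' :: "(nat \<Rightarrow> 'a::{finite,field}) set"
  assumes "p \<in> proj_points n" "p' \<in> proj_points n" "p \<noteq> p'"
    "l \<in> proj_lines n" "l' \<in> proj_lines n" "p \<subseteq> l" "p' \<subseteq> l" "p \<subseteq> l'" "p' \<subseteq> l'"
  shows "l = l'"
proof -
  obtain a where a: "a \<in> vecs n" "a \<noteq> 0" "p = V.span {a}" using assms(1) point_iff by metis
  obtain c where c: "c \<in> vecs n" "c \<noteq> 0" "p' = V.span {c}" using assms(2) point_iff by metis
  have "c \<notin> V.span {a}" using points_distinct_vec[of a n c] a c assms(3) by simp
  then have i: "V.independent {a, c} \<and> a \<noteq> c" using indep2 a by blast
  have "a \<in> p" "c \<in> p'" using a c V.span_base by auto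
  then have "l = V.span {a, c}" "l' = V.span {a, c}"
    using line_sub_eq[of l n a c] line_sub_eq[of l' n a c] i assms by auto
  then show ?thesis by simp
qed

lemma aff_line_inf:
  fixes l :: "(nat \<Rightarrow> 'a::{finite,field}) set"
  assumes l: "l \<in> affine_lines n"
  shows "\<exists>p\<in>points_at_inf n. p \<subseteq> l"
proof -
  have l1: "l \<in> proj_lines n" "\<not> l \<subseteq> hyp_inf n" using l by (auto simp: affine_lines_def)
  have lv: "l \<subseteq> vecs n" "V.subspace l" using l1 line_iff by auto
  obtain a b where ab: "a \<in> l" "b \<in> l" "a \<noteq> b" "V.independent {a, b}" "l = V.span {a, b}"
    using line_basis[OF l1(1)] by blast
  define c where "c = scal (b 0) a + scal (- a 0) b"
  have c0: "c 0 = 0" by (simp add: c_def scal_def mult.commute)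
  have c1: "scal (b 0) a \<in> l" using V.subspace_scale[OF lv(2) ab(1)] .
  have c2: "scal (- a 0) b \<in> l" using V.subspace_scale[OF lv(2) ab(2)] .
  have cl: "c \<in> l" unfolding c_def by (rule V.subspace_add[OF lv(2) c1 c2])
  have cv: "c \<in> vecs n" using cl lv by auto
  have cn: "c \<noteq> 0"
  proof
    assume "c = 0"
    then have "b 0 = 0 \<and> a 0 = 0" using indep2_coeffs[OF ab(4) ab(3), of "b 0" "- a 0"] c_def by simp
    then have "{a, b} \<subseteq> hyp_inf n" using ab lv by (auto simp: hyp_inf_def)
    then have "l \<subseteq> hyp_inf n" using ab(5) span_hyp by metis
    then show False using l1 by simp
  qed
  have "V.span {c} \<in> points_at_inf n"
    unfolding points_at_inf_def using point_iff cv cn point_in_H[OF cv] c0 by blast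
  moreover have "V.span {c} \<subseteq> l" using cl lv by (simp add: V.span_minimal)
  ultimately show ?thesis by blast
qed

lemma aff_line_inf_unique:
  fixes l p p' :: "(nat \<Rightarrow> 'a::{finite,field}) set"
  assumes l: "l \<in> affine_lines n" and p: "p \<in> points_at_inf n" "p' \<in> points_at_inf n"
    and s: "p \<subseteq> l" "p' \<subseteq> l"
  shows "p = p'"
proof (rule ccontr)
  assume ne: "p \<noteq> p'"
  have l1: "l \<in> proj_lines n" "\<not> l \<subseteq> hyp_inf n" using l by (auto simp: affine_lines_def)
  obtain a where a: "a \<in> vecs n" "a \<noteq> 0" "p = V.span {a}"
    using p point_iff unfolding points_at_inf_def by blast
  obtain c where c: "c \<in> vecs n" "c \<noteq> 0" "p' = V.span {c}"
    using p point_iff unfolding points_at_inf_def by blast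
  have "c \<notin> V.span {a}" using points_distinct_vec[of a n c] a c ne by simp
  then have i: "V.independent {a, c} \<and> a \<noteq> c" using indep2 a by blast
  have "a \<in> p" "c \<in> p'" using a c V.span_base by auto
  then have "l = V.span {a, c}" using line_sub_eq[of l n a c] i s l1 by auto
  moreover have "{a, c} \<subseteq> hyp_inf n" using p \<open>a \<in> p\<close> \<open>c \<in> p'\<close>
    unfolding points_at_inf_def by auto
  ultimately show False using l1 span_hyp by metis
qed

lemma finite_subsets_vecs:
  fixes A :: "(nat \<Rightarrow> 'a::{finite,field}) set set"
  assumes "\<And>X. X \<in> A \<Longrightarrow> X \<subseteq> vecs n"
  shows "finite A"
proof -
  have "A \<subseteq> Pow (vecs n)" using assms by auto
  then show ?thesis using vecs_finite finite_subset by blast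
qed

lemma aff_lines_sub: "l \<in> affine_lines n \<Longrightarrow> l \<subseteq> vecs n"
  by (auto simp: affine_lines_def proj_lines_def proj_subspaces_def)

lemma aff_points_sub: "l \<in> affine_points n \<Longrightarrow> l \<subseteq> vecs n"
  by (auto simp: affine_points_def proj_points_def proj_subspaces_def)

lemma inf_points_sub: "l \<in> points_at_inf n \<Longrightarrow> l \<subseteq> vecs n"
  by (auto simp: points_at_inf_def proj_points_def proj_subspaces_def)

lemma join_line:
  fixes P p :: "(nat \<Rightarrow> 'a::{finite,field}) set"
  assumes P: "P \<in> affine_points n" and p: "p \<in> points_at_inf n"
  shows "\<exists>l\<in>affine_lines n. P \<subseteq> l \<and> p \<subseteq> l \<and>
           (\<forall>S. V.subspace S \<longrightarrow> P \<subseteq> S \<longrightarrow> p \<subseteq> S \<longrightarrow> l \<subseteq> S)"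
proof -
  obtain a where a: "a \<in> vecs n" "a \<noteq> 0" "P = V.span {a}"
    using P point_iff unfolding affine_points_def by blast
  obtain c where c: "c \<in> vecs n" "c \<noteq> 0" "p = V.span {c}"
    using p point_iff unfolding points_at_inf_def by blast
  have a0: "a 0 \<noteq> 0" using P a point_in_H[OF a(1)] unfolding affine_points_def by auto
  have c0: "c 0 = 0" using p c point_in_H[OF c(1)] unfolding points_at_inf_def by auto
  have "c \<notin> V.span {a}"
  proof
    assume "c \<in> V.span {a}"
    then obtain k where k: "c = scal k a" using span1_eq by blast
    then have "k * a 0 = 0" using c0 by (simp add: scal_def)
    then have "k = 0" using a0 by simp
    then show False using k c(2) by (simp add: scal_def fun_eq_iff)
  qed
  then have i: "V.independent {a, c} \<and> a \<noteq> c" using indep2 a by blast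
  define l where "l = V.span {a, c}"
  have ll: "l \<in> proj_lines n" using line_span2[of a n c] i a c l_def by simp
  have al: "a \<in> l" unfolding l_def by (rule V.span_base) simp
  have "\<not> l \<subseteq> hyp_inf n" using al a0 by (auto simp: hyp_inf_def)
  then have "l \<in> affine_lines n" using ll by (simp add: affine_lines_def)
  moreover have "P \<subseteq> l" "p \<subseteq> l"
    using a c l_def V.span_mono[of "{a}" "{a,c}"] V.span_mono[of "{c}" "{a,c}"] by auto
  moreover have "l \<subseteq> S" if "V.subspace S" "P \<subseteq> S" "p \<subseteq> S" for S
  proof -
    have "{a, c} \<subseteq> S" using that a c V.span_base by blast
    then show ?thesis using l_def that V.span_minimal[of "{a,c}" S] by simp
  qed
  ultimately show ?thesis by blast
qed

lemma partition_sum: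
  fixes S p :: "(nat \<Rightarrow> 'a::{finite,field}) set" and f :: "(nat \<Rightarrow> 'a) set \<Rightarrow> real"
  assumes S: "V.subspace S" and p: "p \<in> points_at_inf n" "p \<subseteq> S"
  shows "(\<Sum>l\<in>{l \<in> affine_lines n. p \<subseteq> l \<and> l \<subseteq> S}. \<Sum>P\<in>{P \<in> affine_points n. P \<subseteq> l}. f P)
       = (\<Sum>P\<in>{P \<in> affine_points n. P \<subseteq> S}. f P)"
proof -
  let ?I = "{l \<in> affine_lines n. p \<subseteq> l \<and> l \<subseteq> S}"
  let ?A = "\<lambda>l. {P \<in> affine_points n. P \<subseteq> l}"
  have fI: "finite ?I" by (rule finite_subsets_vecs) (auto dest: aff_lines_sub)
  have fA: "\<forall>l\<in>?I. finite (?A l)" by (auto intro!: finite_subsets_vecs dest: aff_points_sub)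
  have disj: "\<forall>l\<in>?I. \<forall>l'\<in>?I. l \<noteq> l' \<longrightarrow> ?A l \<inter> ?A l' = {}"
  proof (intro ballI impI)
    fix l l' assume l: "l \<in> ?I" and l': "l' \<in> ?I" and ne: "l \<noteq> l'"
    show "?A l \<inter> ?A l' = {}"
    proof (rule ccontr)
      assume "?A l \<inter> ?A l' \<noteq> {}"
      then obtain P where P: "P \<in> affine_points n" "P \<subseteq> l" "P \<subseteq> l'" by blast
      have "P \<noteq> p" using P(1) p(1) by (auto simp: affine_points_def points_at_inf_def)
      then have "l = l'"
        using line_unique[of P n p l l'] P l l' p(1)
        by (auto simp: affine_points_def points_at_inf_def affine_lines_def)
      then show False using ne by simp
    qed
  qed
  have U: "\<Union>(?A ` ?I) = {P \<in> affine_points n. P \<subseteq> S}"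
  proof
    show "\<Union>(?A ` ?I) \<subseteq> {P \<in> affine_points n. P \<subseteq> S}" by blast
    show "{P \<in> affine_points n. P \<subseteq> S} \<subseteq> \<Union>(?A ` ?I)"
    proof
      fix P assume P: "P \<in> {P \<in> affine_points n. P \<subseteq> S}"
      then obtain l where l: "l\<in>affine_lines n" "P \<subseteq> l" "p \<subseteq> l"
          "\<forall>S. V.subspace S \<longrightarrow> P \<subseteq> S \<longrightarrow> p \<subseteq> S \<longrightarrow> l \<subseteq> S"
        using join_line[of P n p] p by blast
      then have "l \<in> ?I" using S P p by auto
      then show "P \<in> \<Union>(?A ` ?I)" using l P by blast
    qed
  qed
  show ?thesis using sum.UNION_disjoint[OF fI fA disj, of f] U by simp
qed

lemma CL_count:
  fixes L :: "(nat \<Rightarrow> 'a::{finite,field}) set set"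
  assumes CL: "CL_line_class n L"
  obtains C where "\<And>S p. V.subspace S \<Longrightarrow> p \<in> points_at_inf n \<Longrightarrow> p \<subseteq> S \<Longrightarrow>
      real (card {l \<in> L. p \<subseteq> l \<and> l \<subseteq> S}) = C S"
proof -
  obtain f :: "(nat \<Rightarrow> 'a) set \<Rightarrow> real" where
    LA: "L \<subseteq> affine_lines n" and
    f: "\<forall>l \<in> affine_lines n. (if l \<in> L then 1 else 0) = (\<Sum>P \<in> {P \<in> affine_points n. P \<subseteq> l}. f P)"
    using CL unfolding CL_line_class_def by blast
  have *: "real (card {l \<in> L. p \<subseteq> l \<and> l \<subseteq> S}) = (\<Sum>P\<in>{P \<in> affine_points n. P \<subseteq> S}. f P)"
    if S: "V.subspace S" and p: "p \<in> points_at_inf n" "p \<subseteq> S" for S p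
  proof -
    let ?I = "{l \<in> affine_lines n. p \<subseteq> l \<and> l \<subseteq> S}"
    have fI: "finite ?I" by (rule finite_subsets_vecs) (auto dest: aff_lines_sub)
    have eq: "{l \<in> L. p \<subseteq> l \<and> l \<subseteq> S} = {l \<in> ?I. l \<in> L}" using LA by auto
    have "real (card {l \<in> L. p \<subseteq> l \<and> l \<subseteq> S}) = (\<Sum>l\<in>{l \<in> ?I. l \<in> L}. (1::real))"
      using eq by simp
    also have "\<dots> = (\<Sum>l\<in>?I. if l \<in> L then 1 else 0)"
      using sum.inter_filter[OF fI, of "\<lambda>_. (1::real)" "\<lambda>l. l \<in> L"] by simp
    also have "\<dots> = (\<Sum>l\<in>?I. \<Sum>P \<in> {P \<in> affine_points n. P \<subseteq> l}. f P)"
      using f by (intro sum.cong) auto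
    also have "\<dots> = (\<Sum>P\<in>{P \<in> affine_points n. P \<subseteq> S}. f P)"
      by (rule partition_sum[OF S p])
    finally show ?thesis .
  qed
  show ?thesis by (rule that[of "\<lambda>S. \<Sum>P\<in>{P \<in> affine_points n. P \<subseteq> S}. f P"]) (rule *)
qed

lemma card_hyp: "card (hyp_inf n :: (nat \<Rightarrow> 'a::{finite,field}) set) = card (UNIV :: 'a set) ^ n"
proof -
  have "bij_betw (\<lambda>v. restrict v {1..n}) (hyp_inf n :: (nat \<Rightarrow> 'a) set) ({1..n} \<rightarrow>\<^sub>E (UNIV :: 'a set))"
  proof (rule bij_betw_byWitness[where f'="\<lambda>g i. if i \<in> {1..n} then g i else 0"])
    show "\<forall>a\<in>hyp_inf n. (\<lambda>i. if i \<in> {1..n} then restrict a {1..n} i else 0) = (a :: nat \<Rightarrow> 'a)"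
    proof
      fix a :: "nat \<Rightarrow> 'a" assume a: "a \<in> hyp_inf n"
      show "(\<lambda>i. if i \<in> {1..n} then restrict a {1..n} i else 0) = a"
      proof
        fix i show "(if i \<in> {1..n} then restrict a {1..n} i else 0) = a i"
          using a by (cases "i = 0") (auto simp: hyp_inf_def vecs_def)
      qed
    qed
    show "\<forall>a'\<in>{1..n} \<rightarrow>\<^sub>E UNIV. restrict (\<lambda>i. if i \<in> {1..n} then a' i else (0::'a)) {1..n} = a'"
      by (auto simp: restrict_def fun_eq_iff PiE_def extensional_def)
    show "(\<lambda>v. restrict v {1..n}) ` hyp_inf n \<subseteq> {1..n} \<rightarrow>\<^sub>E (UNIV :: 'a set)"
      by (simp add: image_subset_iff)
    show "(\<lambda>g i. if i \<in> {1..n} then g i else 0) ` ({1..n} \<rightarrow>\<^sub>E UNIV) \<subseteq> (hyp_inf n :: (nat \<Rightarrow> 'a) set)"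
      by (auto simp: hyp_inf_def vecs_def)
  qed
  then have "card (hyp_inf n :: (nat \<Rightarrow> 'a) set) = card ({1..n} \<rightarrow>\<^sub>E (UNIV :: 'a set))"
    by (rule bij_betw_same_card)
  also have "\<dots> = card (UNIV :: 'a set) ^ n" by (simp add: card_PiE)
  finally show ?thesis .
qed

lemma card_span1:
  fixes a :: "nat \<Rightarrow> 'a::{finite,field}"
  assumes "a \<noteq> 0"
  shows "card (V.span {a}) = card (UNIV :: 'a set)"
proof -
  have "inj (\<lambda>k. scal k a)" using assms by (simp add: inj_on_def)
  then show ?thesis using span1_eq card_image by metis
qed

lemma card_points_inf:
  "card (points_at_inf n :: (nat \<Rightarrow> 'a::{finite,field}) set set) * (card (UNIV :: 'a set) - 1)
     = card (UNIV :: 'a set) ^ n - 1"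
proof -
  let ?PI = "points_at_inf n :: (nat \<Rightarrow> 'a) set set"
  let ?A = "\<lambda>p. p - {0}"
  have fI: "finite ?PI" by (rule finite_subsets_vecs) (auto dest: inf_points_sub)
  have fA: "\<forall>p\<in>?PI. finite (?A p)" using inf_points_sub indep_finite by blast
  have disj: "\<forall>p\<in>?PI. \<forall>p'\<in>?PI. p \<noteq> p' \<longrightarrow> ?A p \<inter> ?A p' = {}"
  proof (intro ballI impI)
    fix p p' assume p: "p \<in> ?PI" and p': "p' \<in> ?PI" and ne: "p \<noteq> p'"
    show "?A p \<inter> ?A p' = {}"
    proof (rule ccontr)
      assume "?A p \<inter> ?A p' \<noteq> {}"
      then obtain v where v: "v \<in> p" "v \<in> p'" "v \<noteq> 0" by blast
      have vv: "v \<in> vecs n" using v p inf_points_sub by blast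
      have pt: "V.span {v} \<in> proj_points n" using point_iff vv v by blast
      have sp: "V.subspace p" "V.subspace p'" using p p'
        by (auto simp: points_at_inf_def proj_points_def proj_subspaces_def)
      have "V.span {v} \<subseteq> p" "V.span {v} \<subseteq> p'"
        using V.span_minimal[of "{v}" p] V.span_minimal[of "{v}" p'] v sp by auto
      then have "V.span {v} = p" "V.span {v} = p'"
        using point_sub_eq[OF pt] p p' by (auto simp: points_at_inf_def)
      then show False using ne by simp
    qed
  qed
  have U: "\<Union>(?A ` ?PI) = hyp_inf n - {0}"
  proof
    show "\<Union>(?A ` ?PI) \<subseteq> hyp_inf n - {0}" by (auto simp: points_at_inf_def)
    show "hyp_inf n - {0} \<subseteq> \<Union>(?A ` ?PI)"
    proof
      fix v :: "nat \<Rightarrow> 'a" assume v: "v \<in> hyp_inf n - {0}"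
      have vv: "v \<in> vecs n" "v 0 = 0" "v \<noteq> 0" using v by (auto simp: hyp_inf_def)
      have "V.span {v} \<in> ?PI" unfolding points_at_inf_def
        using point_iff point_in_H[OF vv(1)] vv by blast
      moreover have "v \<in> ?A (V.span {v})" using vv V.span_base by blast
      ultimately show "v \<in> \<Union>(?A ` ?PI)" by blast
    qed
  qed
  have cA: "card (?A p) = card (UNIV :: 'a set) - 1" if p: "p \<in> ?PI" for p
  proof -
    obtain a where a: "a \<in> vecs n" "a \<noteq> 0" "p = V.span {a}"
      using p point_iff unfolding points_at_inf_def by blast
    have "0 \<in> p" using a V.span_zero by simp
    then show ?thesis using card_span1[OF a(2)] a(3) fA p by (simp add: card_Diff_singleton)
  qed
  have "card (hyp_inf n - {0} :: (nat \<Rightarrow> 'a) set) = card (UNIV :: 'a set) ^ n - 1"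
  proof -
    have h: "card (hyp_inf n :: (nat \<Rightarrow> 'a) set) = card (UNIV::'a set) ^ n" by (rule card_hyp)
    have h0: "(0::nat\<Rightarrow>'a) \<in> hyp_inf n" by (rule V.subspace_0[OF hyp_subspace])
    show ?thesis using h card_Diff_singleton[OF h0] by simp
  qed
  moreover have "card (hyp_inf n - {0} :: (nat \<Rightarrow> 'a) set) = (\<Sum>p\<in>?PI. card (?A p))"
    using card_UN_disjoint[OF fI fA disj] U by simp
  moreover have "(\<Sum>p\<in>?PI. card (?A p)) = card ?PI * (card (UNIV :: 'a set) - 1)"
    using cA by simp
  ultimately show ?thesis by simp
qed

lemma card_L_sum:
  fixes L :: "(nat \<Rightarrow> 'a::{finite,field}) set set"
  assumes LA: "L \<subseteq> affine_lines n"
  shows "card L = (\<Sum>p\<in>points_at_inf n. card {l \<in> L. p \<subseteq> l})"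
proof -
  have fL: "finite L" by (rule finite_subsets_vecs) (use LA in \<open>auto dest: aff_lines_sub\<close>)
  have fI: "finite (points_at_inf n :: (nat \<Rightarrow> 'a) set set)"
    by (rule finite_subsets_vecs) (auto dest: inf_points_sub)
  have one: "card {p \<in> points_at_inf n. p \<subseteq> l} = 1" if l: "l \<in> L" for l
  proof -
    obtain p where p: "p \<in> points_at_inf n" "p \<subseteq> l" using aff_line_inf l LA by blast
    have "{p \<in> points_at_inf n. p \<subseteq> l} = {p}"
      using p aff_line_inf_unique[of l n] l LA by blast
    then show ?thesis by simp
  qed
  have "card L = (\<Sum>l\<in>L. card {p \<in> points_at_inf n. p \<subseteq> l})" using one by simp
  also have "\<dots> = (\<Sum>l\<in>L. \<Sum>p\<in>{p \<in> points_at_inf n. p \<subseteq> l}. (1::nat))" by simp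
  also have "\<dots> = (\<Sum>p\<in>points_at_inf n. \<Sum>l\<in>{l \<in> L. p \<subseteq> l}. (1::nat))"
    by (rule sum.swap_restrict[OF fL fI])
  also have "\<dots> = (\<Sum>p\<in>points_at_inf n. card {l \<in> L. p \<subseteq> l})" by simp
  finally show ?thesis .
qed

lemma key_plane:
  fixes L :: "(nat \<Rightarrow> 'a::{finite,field}) set set"
  assumes eqc: "\<And>S p p'. V.subspace S \<Longrightarrow> p \<in> points_at_inf n \<Longrightarrow> p' \<in> points_at_inf n \<Longrightarrow>
      p \<subseteq> S \<Longrightarrow> p' \<subseteq> S \<Longrightarrow> card {l \<in> L. p \<subseteq> l \<and> l \<subseteq> S} = card {l \<in> L. p' \<subseteq> l \<and> l \<subseteq> S}"
    and LA: "L \<subseteq> affine_lines n"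
    and m: "m \<in> L" "p2 \<subseteq> m"
    and p: "p1 \<in> points_at_inf n" "p2 \<in> points_at_inf n" "p1 \<noteq> p2"
  shows "\<exists>l\<in>L. p1 \<subseteq> l \<and> m \<subseteq> V.span (l \<union> p2)"
proof -
  have fL: "finite L" by (rule finite_subsets_vecs) (use LA in \<open>auto dest: aff_lines_sub\<close>)
  obtain a where a: "a \<in> vecs n" "a \<noteq> 0" "p1 = V.span {a}"
    using p point_iff unfolding points_at_inf_def by blast
  obtain c where c: "c \<in> vecs n" "c \<noteq> 0" "p2 = V.span {c}"
    using p point_iff unfolding points_at_inf_def by blast
  have mA: "m \<in> affine_lines n" using m LA by auto
  then have mL: "m \<in> proj_lines n" by (simp add: affine_lines_def)
  have cm: "c \<in> m" using m c V.span_base by auto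
  obtain d where d: "d \<in> m" "c \<noteq> d" "V.independent {c, d}" "m = V.span {c, d}"
    using line_extend[OF mL cm c(2)] by blast
  have mv: "m \<subseteq> vecs n" using mA aff_lines_sub by blast
  define \<sigma> where "\<sigma> = V.span {c, d, a}"
  have \<sigma>v: "\<sigma> \<subseteq> vecs n" unfolding \<sigma>_def using span_vecs[of "{c,d,a}" n] a c d mv by auto
  have p1\<sigma>: "p1 \<subseteq> \<sigma>" unfolding \<sigma>_def a(3) by (rule V.span_mono) auto
  have p2\<sigma>: "p2 \<subseteq> \<sigma>" unfolding \<sigma>_def c(3) by (rule V.span_mono) auto
  have m\<sigma>: "m \<subseteq> \<sigma>" unfolding \<sigma>_def d(4) by (rule V.span_mono) auto
  have "m \<in> {l \<in> L. p2 \<subseteq> l \<and> l \<subseteq> \<sigma>}" using m m\<sigma> by auto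
  moreover have "finite {l \<in> L. p2 \<subseteq> l \<and> l \<subseteq> \<sigma>}" using fL by simp
  ultimately have "card {l \<in> L. p2 \<subseteq> l \<and> l \<subseteq> \<sigma>} \<noteq> 0" by auto
  then have "card {l \<in> L. p1 \<subseteq> l \<and> l \<subseteq> \<sigma>} \<noteq> 0"
    using eqc[of \<sigma> p1 p2] p p1\<sigma> p2\<sigma> unfolding \<sigma>_def by simp
  then obtain l where l: "l \<in> L" "p1 \<subseteq> l" "l \<subseteq> \<sigma>" by (metis (no_types, lifting) card.empty empty_Collect_eq)
  have lA: "l \<in> affine_lines n" using l LA by auto
  then have lL: "l \<in> proj_lines n" by (simp add: affine_lines_def)
  have al: "a \<in> l" using l a V.span_base by auto
  obtain b where b: "b \<in> l" "a \<noteq> b" "V.independent {a, b}" "l = V.span {a, b}"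
    using line_extend[OF lL al a(2)] by blast
  have cl: "c \<notin> l"
  proof
    assume "c \<in> l"
    then have "p2 \<subseteq> l" using c lL V.span_minimal[of "{c}" l] by (auto simp: line_iff)
    then show False using aff_line_inf_unique[OF lA p(1) p(2) l(2)] p(3) by simp
  qed
  define T where "T = V.span (l \<union> p2)"
  have T\<sigma>: "T \<subseteq> \<sigma>" unfolding T_def
    using V.span_minimal[of "l \<union> p2" \<sigma>] l p2\<sigma> \<sigma>_def by auto
  have ind3: "V.independent (insert c {a, b})"
    using V.independent_insertI[of c "{a,b}"] cl b by simp
  have c3: "card (insert c {a, b}) = 3"
  proof -
    have "c \<notin> {a, b}" using cl al b(1) by auto
    then show ?thesis using b(2) by simp
  qed
  have sub3: "insert c {a, b} \<subseteq> T" unfolding T_def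
    using V.span_base[of _ "l \<union> p2"] al b(1) c V.span_base[of c "{c}"] by auto
  have Tv: "T \<subseteq> vecs n" using T\<sigma> \<sigma>v by simp
  have "3 \<le> V.dim T" using indep_card_le[OF sub3 ind3 Tv] c3 by simp
  moreover have "V.dim \<sigma> \<le> 3"
  proof -
    have "V.dim \<sigma> \<le> card {c, d, a}" unfolding \<sigma>_def
      by (rule V.dim_le_card) auto
    also have "\<dots> \<le> 3"
    proof -
      have "{c, d, a} = set [c, d, a]" by simp
      then have "card {c, d, a} \<le> length [c, d, a]" using card_length by metis
      then show ?thesis by simp
    qed
    finally show ?thesis .
  qed
  ultimately have "T = \<sigma>"
    using subspace_eq_dim[of T \<sigma> n] T\<sigma> \<sigma>v unfolding T_def \<sigma>_def by simp
  then show ?thesis using l m\<sigma> T_def by blast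
qed


theorem lemma6p6:
  fixes L :: "(nat \<Rightarrow> 'a::{finite,field}) set set" and n :: nat
  assumes "n \<ge> 4"
    and "CL_line_class n L"
    and "CL_parameter n L = 2"
  shows "\<forall>p1 \<in> points_at_inf n. \<forall>p2 \<in> points_at_inf n. p1 \<noteq> p2 \<longrightarrow>
           card {l \<in> L. p1 \<subseteq> l} = 2 \<and> card {l \<in> L. p2 \<subseteq> l} = 2 \<and>
           vector_space.dim scal (\<Union>{l \<in> L. p1 \<subseteq> l \<or> p2 \<subseteq> l}) \<le> 4"
proof -
  have LA: "L \<subseteq> affine_lines n" using assms(2) unfolding CL_line_class_def by blast
  have fL: "finite L" by (rule finite_subsets_vecs) (use LA in \<open>auto dest: aff_lines_sub\<close>)
  obtain C where C: "\<And>S p. V.subspace S \<Longrightarrow> p \<in> points_at_inf n \<Longrightarrow> p \<subseteq> S \<Longrightarrow>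
      real (card {l \<in> L. p \<subseteq> l \<and> l \<subseteq> S}) = C S"
    using CL_count[OF assms(2)] by blast
  have eqc: "card {l \<in> L. p \<subseteq> l \<and> l \<subseteq> S} = card {l \<in> L. p' \<subseteq> l \<and> l \<subseteq> S}"
    if "V.subspace S" "p \<in> points_at_inf n" "p' \<in> points_at_inf n" "p \<subseteq> S" "p' \<subseteq> S" for S p p'
    using C[of S p] C[of S p'] that by simp
  have K: "real (card {l \<in> L. p \<subseteq> l}) = C (vecs n)" if p: "p \<in> points_at_inf n" for p
  proof -
    have "{l \<in> L. p \<subseteq> l} = {l \<in> L. p \<subseteq> l \<and> l \<subseteq> vecs n}" using LA aff_lines_sub by blast
    then show ?thesis using C[OF vecs_subspace p inf_points_sub[OF p]] by simp
  qed
  define q where "q = card (UNIV :: 'a set)"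
  define N where "N = card (points_at_inf n :: (nat \<Rightarrow> 'a) set set)"
  have q2: "q \<ge> 2"
  proof -
    have "card {0::'a, 1} = 2" by simp
    moreover have "card {0::'a, 1} \<le> q" unfolding q_def by (rule card_mono) auto
    ultimately show ?thesis by simp
  qed
  have Nq: "N * (q - 1) = q ^ n - 1" unfolding N_def q_def by (rule card_points_inf)
  have qn: "q ^ n \<ge> q" using q2 assms(1) by (simp add: self_le_power)
  have NqR: "real N * (real q - 1) = real q ^ n - 1"
  proof -
    have "real (N * (q - 1)) = real (q ^ n - 1)" using Nq by simp
    then show ?thesis using q2 qn by (simp add: of_nat_diff)
  qed
  have qnR: "real q ^ n - 1 > 0"
  proof -
    have h1: "real q \<ge> 2" using q2 by simp
    have h2: "real (q ^ n) \<ge> real q" using qn by (simp only: of_nat_le_iff)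
    have h3: "real (q ^ n) = real q ^ n" by simp
    show ?thesis using h1 h2 h3 by linarith
  qed
  have cardL: "real (card L) = real N * C (vecs n)"
  proof -
    have "card L = (\<Sum>p\<in>points_at_inf n. card {l \<in> L. p \<subseteq> l})" by (rule card_L_sum[OF LA])
    then have "real (card L) = (\<Sum>p\<in>points_at_inf n. real (card {l \<in> L. p \<subseteq> l}))" by simp
    also have "\<dots> = (\<Sum>p\<in>(points_at_inf n :: (nat \<Rightarrow> 'a) set set). C (vecs n))" using K by (intro sum.cong) auto
    finally show ?thesis unfolding N_def by simp
  qed
  have par: "real (card L) * (real q - 1) = 2 * (real q ^ n - 1)"
    using assms(3) qnR unfolding CL_parameter_def q_def by (simp add: field_simps)
  have "C (vecs n) * (real q ^ n - 1) = C (vecs n) * (real N * (real q - 1))" using NqR by simp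
  also have "\<dots> = real (card L) * (real q - 1)" using cardL by (simp add: algebra_simps)
  also have "\<dots> = 2 * (real q ^ n - 1)" using par .
  finally have hC: "C (vecs n) * (real q ^ n - 1) = 2 * (real q ^ n - 1)" .
  have Dn: "real q ^ n - 1 \<noteq> 0" using qnR by simp
  have "(C (vecs n) - 2) * (real q ^ n - 1) = 0" using hC by (simp add: algebra_simps)
  then have C2: "C (vecs n) = 2" using Dn by simp
  have two: "card {l \<in> L. p \<subseteq> l} = 2" if "p \<in> points_at_inf n" for p
    using K[OF that] C2 by simp
  show ?thesis
  proof (intro ballI impI conjI)
    fix p1 p2 :: "(nat \<Rightarrow> 'a) set" assume p1: "p1 \<in> points_at_inf n" and p2: "p2 \<in> points_at_inf n" and ne: "p1 \<noteq> p2"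
    show "card {l \<in> L. p1 \<subseteq> l} = 2" using two p1 by simp
    show "card {l \<in> L. p2 \<subseteq> l} = 2" using two p2 by simp
    obtain a where a: "a \<in> vecs n" "a \<noteq> 0" "p1 = V.span {a}"
      using p1 point_iff unfolding points_at_inf_def by blast
    obtain c where c: "c \<in> vecs n" "c \<noteq> 0" "p2 = V.span {c}"
      using p2 point_iff unfolding points_at_inf_def by blast
    have "\<exists>x y. {l \<in> L. p1 \<subseteq> l} = {x, y} \<and> x \<noteq> y"
      using two[OF p1] by (simp only: card_2_iff)
    then obtain l1 l2 where l12: "{l \<in> L. p1 \<subseteq> l} = {l1, l2}" by blast
    have l1i: "l1 \<in> L" "p1 \<subseteq> l1" using l12 by (simp_all add: set_eq_iff, blast+)
    have l2i: "l2 \<in> L" "p1 \<subseteq> l2" using l12 by (simp_all add: set_eq_iff, blast+)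
    have exb: "\<exists>b. l = V.span {a, b}" if "l \<in> L" "p1 \<subseteq> l" for l
    proof -
      have lL: "l \<in> proj_lines n" using that LA by (auto simp: affine_lines_def)
      have "a \<in> l" using that a V.span_base by auto
      then show ?thesis using line_extend[OF lL _ a(2)] by blast
    qed
    obtain b1 where b1: "l1 = V.span {a, b1}" using exb[OF l1i] by blast
    obtain b2 where b2: "l2 = V.span {a, b2}" using exb[OF l2i] by blast
    define W where "W = {a, b1, b2, c}"
    have l1W: "l1 \<subseteq> V.span W" unfolding b1 W_def by (rule V.span_mono) auto
    have l2W: "l2 \<subseteq> V.span W" unfolding b2 W_def by (rule V.span_mono) auto
    have p2W: "p2 \<subseteq> V.span W" unfolding c W_def by (rule V.span_mono) auto
    have "\<Union>{l \<in> L. p1 \<subseteq> l \<or> p2 \<subseteq> l} \<subseteq> V.span W"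
    proof (rule Union_least)
      fix m assume m: "m \<in> {l \<in> L. p1 \<subseteq> l \<or> p2 \<subseteq> l}"
      show "m \<subseteq> V.span W"
      proof (cases "p1 \<subseteq> m")
        case True
        then have "m \<in> {l \<in> L. p1 \<subseteq> l}" using m by simp
        then have "m \<in> {l1, l2}" using l12 by simp
        then show ?thesis using l1W l2W by blast
      next
        case False
        then have mm: "m \<in> L" "p2 \<subseteq> m" using m by auto
        obtain l where l: "l \<in> L" "p1 \<subseteq> l" "m \<subseteq> V.span (l \<union> p2)"
          using key_plane[of n L, OF eqc LA mm p1 p2 ne] by blast
        have "l \<in> {l \<in> L. p1 \<subseteq> l}" using l by simp
        then have "l \<in> {l1, l2}" using l12 by simp
        then have "l \<subseteq> V.span W" using l1W l2W by blast
        then have "V.span (l \<union> p2) \<subseteq> V.span W"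
          using p2W V.span_minimal[of "l \<union> p2" "V.span W"] by simp
        then show ?thesis using l by blast
      qed
    qed
    then have "V.dim (\<Union>{l \<in> L. p1 \<subseteq> l \<or> p2 \<subseteq> l}) \<le> card W"
      by (rule V.dim_le_card) (simp add: W_def)
    also have "card W \<le> 4"
    proof -
      have "W = set [a, b1, b2, c]" by (simp add: W_def)
      then have "card W \<le> length [a, b1, b2, c]" using card_length by metis
      then show ?thesis by simp
    qed
    finally show "vector_space.dim scal (\<Union>{l \<in> L. p1 \<subseteq> l \<or> p2 \<subseteq> l}) \<le> 4" by simp
  qed
qed

end
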